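(* Let $\alpha,\beta,\theta$ be cost functions of class $C^1$ with $\alpha+\beta=\theta$, and assume $\theta$ is strictly convex. Let $f:\mathbb{R}\to\mathbb{R}$ be a convex function of class $C^1$ that is bounded from below. Then there exist convex functions $f_1,f_2:\mathbb{R}\to\mathbb{R}$ of class $C^1$ with the following properties: - $f=f_1+f_2$; - for all $t>0$, $Q_t^\theta f=Q_t^\alpha f_1+Q_t^\beta f_2$; - on the set $I=\{x\in\mathbb{R}: f'(x)\in\theta'(\mathbb{R})\}$, one has $f_1'=\alpha'\circ(\theta')^{-1}\circ f'$. Concretely, $f_1$ can be taken as $f_1(x)=a+\int_{x_0}^x\alpha'\circ(\theta')^{-1}\circ f'(u)\,du$ on $I$ for a point $x_0\in I$ and any constant $a$, extended affinely outside $I$.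
   Context: A cost function is an even convex function $\theta:\mathbb{R}\to[0,\infty)$ with $\theta(0)=0$. For $t>0$ and $f:\mathbb{R}\to\mathbb{R}$, the Hopf–Lax operator is $$Q_t^\theta f(x)=\inf_{y\in\mathbb{R}}\Big\{f(y)+t\,\theta\Big(\frac{y-x}{t}\Big)\Big\}.$$ For strictly convex $\theta\in C^1$, $(\theta')^{-1}:\theta'(\mathbb{R})\to\mathbb{R}$ denotes the inverse of the strictly increasing map $\theta'$. *)

theory Defs
  imports "HOL-Analysis.Analysis"
begin

definition cost_function :: "(real \<Rightarrow> real) \<Rightarrow> bool" where
  "cost_function \<theta> \<longleftrightarrow> (\<forall>x. \<theta> (- x) = \<theta> x) \<and> convex_on UNIV \<theta> \<and> (\<forall>x. \<theta> x \<ge> 0) \<and> \<theta> 0 = 0"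

definition strictly_convex :: "(real \<Rightarrow> real) \<Rightarrow> bool" where
  "strictly_convex f \<longleftrightarrow>
     (\<forall>x y u. x \<noteq> y \<and> 0 < u \<and> u < 1 \<longrightarrow> f ((1 - u) * x + u * y) < (1 - u) * f x + u * f y)"

definition C1 :: "(real \<Rightarrow> real) \<Rightarrow> bool" where
  "C1 f \<longleftrightarrow> (\<forall>x. f differentiable (at x)) \<and> continuous_on UNIV (deriv f)"

text \<open>Hopf--Lax operator, valued in the extended reals (the infimum may be -infinity).\<close>
definition hopf_lax :: "(real \<Rightarrow> real) \<Rightarrow> real \<Rightarrow> (real \<Rightarrow> real) \<Rightarrow> real \<Rightarrow> ereal" where
  "hopf_lax \<theta> t f x = (INF y. ereal (f y + t * \<theta> ((y - x) / t)))"

end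

theory Submission imports Defs begin

lemma antideriv_exists:
  fixes p :: "real \<Rightarrow> real"
  assumes "continuous_on UNIV p"
  shows "\<exists>F. \<forall>x. (F has_real_derivative p x) (at x)"
proof -
  define F where "F y = integral {0..y} p - integral {y..0} p" for y
  have int: "p integrable_on {a..b}" for a b
    by (rule integrable_continuous_real) (auto intro: continuous_on_subset[OF assms])
  have "(F has_real_derivative p x) (at x)" for x
  proof -
    define c where "c = min 0 x - 1"
    have eq: "integral {c..y} p - integral {c..0} p = F y" if "y \<in> {c<..}" for y
    proof (cases "y \<ge> 0")
      case True
      have "integral {c..0} p + integral {0..y} p = integral {c..y} p"
        by (rule Henstock_Kurzweil_Integration.integral_combine[where a=c and c=0 and b=y and f=p]) (use True int in \<open>auto simp: c_def\<close>)
      moreover have "integral {y..0} p = 0" using True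
        by (cases "y = 0") auto
      ultimately show ?thesis unfolding F_def by simp
    next
      case False
      have "integral {c..y} p + integral {y..0} p = integral {c..0} p"
        by (rule Henstock_Kurzweil_Integration.integral_combine[where a=c and c=y and b=0 and f=p]) (use False that int in \<open>auto simp: c_def\<close>)
      moreover have "integral {0..y} p = 0" using False by auto
      ultimately show ?thesis unfolding F_def by simp
    qed
    have "((\<lambda>y. integral {c..y} p) has_real_derivative p x) (at x within {c..x+1})"
      by (rule integral_has_real_derivative) (auto intro: continuous_on_subset[OF assms] simp: c_def)
    moreover have "x \<in> interior {c..x+1}" by (auto simp: c_def)
    ultimately have "((\<lambda>y. integral {c..y} p) has_real_derivative p x) (at x)"
      using at_within_interior by metis
    then have "((\<lambda>y. integral {c..y} p - integral {c..0} p) has_real_derivative p x - 0) (at x)"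
      by (intro DERIV_diff DERIV_const)
    then have d: "((\<lambda>y. integral {c..y} p - integral {c..0} p) has_real_derivative p x) (at x)"
      by simp
    have xc: "x \<in> {c<..}" by (simp add: c_def)
    show ?thesis
      by (rule has_field_derivative_transform_within_open[OF d open_greaterThan xc eq])
  qed
  then show ?thesis by blast
qed

lemma tangent_ineq:
  fixes g :: "real \<Rightarrow> real"
  assumes "convex_on UNIV g" "(g has_real_derivative d) (at c)"
  shows "g y \<ge> g c + d * (y - c)"
  using convex_on_imp_above_tangent[OF assms(1), of c y d] assms(2) by auto

lemma mono_deriv:
  fixes g :: "real \<Rightarrow> real"
  assumes "convex_on UNIV g" "\<And>x. (g has_real_derivative g' x) (at x)" "x \<le> y"
  shows "g' x \<le> g' y"
proof -
  have "g y \<ge> g x + g' x * (y - x)" "g x \<ge> g y + g' y * (x - y)"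
    using tangent_ineq[OF assms(1) assms(2)] by auto
  then have "(g' y - g' x) * (y - x) \<ge> 0" by (simp add: algebra_simps)
  then show ?thesis using assms(3)
    by (cases "x = y") (auto simp: zero_le_mult_iff)
qed

lemma odd_deriv:
  fixes g :: "real \<Rightarrow> real"
  assumes "\<And>x. g (- x) = g x" "\<And>x. (g has_real_derivative g' x) (at x)"
  shows "g' (- x) = - g' x"
proof -
  have "((\<lambda>y. g (- y)) has_real_derivative g' (- x) * (-1)) (at x)"
    by (rule DERIV_chain2[OF assms(2)]) (auto intro!: derivative_eq_intros)
  then have "(g has_real_derivative - g' (- x)) (at x)" using assms(1) by simp
  then have "g' x = - g' (- x)" using DERIV_unique assms(2) by blast
  then show ?thesis by simp
qed

lemma INF_attained:
  fixes F :: "real \<Rightarrow> real"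
  assumes "\<And>y. F z \<le> F y"
  shows "(INF y. ereal (F y)) = ereal (F z)"
  by (rule antisym) (auto intro!: INF_lower2[of z] INF_greatest simp: assms)

theorem proposition2p4:
  fixes \<alpha> \<beta> \<theta> f :: "real \<Rightarrow> real"
  assumes "cost_function \<alpha>" and "cost_function \<beta>" and "cost_function \<theta>"
    and "C1 \<alpha>" and "C1 \<beta>" and "C1 \<theta>"
    and "\<And>x. \<alpha> x + \<beta> x = \<theta> x"
    and "strictly_convex \<theta>"
    and "convex_on UNIV f" and "C1 f" and "bdd_below (range f)"
  shows "\<exists>f1 f2 :: real \<Rightarrow> real.
           convex_on UNIV f1 \<and> convex_on UNIV f2 \<and> C1 f1 \<and> C1 f2 \<and>
           (\<forall>x. f x = f1 x + f2 x) \<and>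
           (\<forall>t>0. \<forall>x. hopf_lax \<theta> t f x = hopf_lax \<alpha> t f1 x + hopf_lax \<beta> t f2 x) \<and>
           (\<forall>x. deriv f x \<in> range (deriv \<theta>) \<longrightarrow>
                deriv f1 x = deriv \<alpha> (inv_into UNIV (deriv \<theta>) (deriv f x)))"
proof -
  define a where "a = deriv \<alpha>"
  define b where "b = deriv \<beta>"
  define th where "th = deriv \<theta>"
  define fd where "fd = deriv f"
  have Da: "\<And>x. (\<alpha> has_real_derivative a x) (at x)"
    using assms(4) unfolding C1_def a_def by (simp add: DERIV_deriv_iff_real_differentiable)
  have Db: "\<And>x. (\<beta> has_real_derivative b x) (at x)"
    using assms(5) unfolding C1_def b_def by (simp add: DERIV_deriv_iff_real_differentiable)
  have Dth: "\<And>x. (\<theta> has_real_derivative th x) (at x)"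
    using assms(6) unfolding C1_def th_def by (simp add: DERIV_deriv_iff_real_differentiable)
  have Df: "\<And>x. (f has_real_derivative fd x) (at x)"
    using assms(10) unfolding C1_def fd_def by (simp add: DERIV_deriv_iff_real_differentiable)
  have fdc: "continuous_on UNIV fd" using assms(10) unfolding C1_def fd_def by simp
  have thc: "continuous_on UNIV th" using assms(6) unfolding C1_def th_def by simp
  have cva: "convex_on UNIV \<alpha>" and cvb: "convex_on UNIV \<beta>" and cvt: "convex_on UNIV \<theta>"
    using assms(1-3) unfolding cost_function_def by auto
  have tha: "th x = a x + b x" for x
  proof -
    have "((\<lambda>x. \<alpha> x + \<beta> x) has_real_derivative a x + b x) (at x)"
      using Da Db by (rule DERIV_add)
    then have "(\<theta> has_real_derivative a x + b x) (at x)" using assms(7) by simp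
    then show ?thesis using DERIV_unique Dth by blast
  qed
  have ma: "x \<le> y \<Longrightarrow> a x \<le> a y" for x y using mono_deriv[OF cva Da] by blast
  have mb: "x \<le> y \<Longrightarrow> b x \<le> b y" for x y using mono_deriv[OF cvb Db] by blast
  have mth: "x \<le> y \<Longrightarrow> th x \<le> th y" for x y using mono_deriv[OF cvt Dth] by blast
  have mf: "x \<le> y \<Longrightarrow> fd x \<le> fd y" for x y using mono_deriv[OF assms(9) Df] by blast
  have oa: "a (- x) = - a x" for x
    using odd_deriv[of \<alpha> a] Da assms(1) unfolding cost_function_def by blast
  have ob: "b (- x) = - b x" for x
    using odd_deriv[of \<beta> b] Db assms(2) unfolding cost_function_def by blast
  have oth: "th (- x) = - th x" for x
    using odd_deriv[of \<theta> th] Dth assms(3) unfolding cost_function_def by blast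
  have a0: "a 0 = 0" using oa[of 0] by simp
  have b0: "b 0 = 0" using ob[of 0] by simp
  have t1pos: "\<theta> 1 > 0"
  proof -
    have "\<theta> ((1 - 1/2) * 0 + (1/2) * 1) < (1 - 1/2) * \<theta> 0 + (1/2) * \<theta> 1"
      using assms(8) unfolding strictly_convex_def by (elim allE[of _ 0] allE[of _ 1] allE[of _ "1/2"]) simp
    moreover have "\<theta> 0 = 0" "\<theta> (1/2) \<ge> 0" using assms(3) unfolding cost_function_def by auto
    ultimately show ?thesis by simp
  qed
  have c_pos: "th 1 > 0"
  proof -
    have "\<theta> 0 \<ge> \<theta> 1 + th 1 * (0 - 1)" by (rule tangent_ineq[OF cvt Dth])
    moreover have "\<theta> 0 = 0" using assms(3) unfolding cost_function_def by auto
    ultimately show ?thesis using t1pos by simp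
  qed
  define T where "T v s = min (a s) (a s + v - th s)" for v s
  define P where "P v = (SUP s. T v s)" for v
  have Tbd: "T v s \<le> max v 0" for v s
  proof (cases "s \<ge> 0")
    case True
    then have "b s \<ge> 0" using mb[of 0 s] b0 by simp
    then show ?thesis unfolding T_def using tha[of s] by simp
  next
    case False
    then have "a s \<le> 0" using ma[of s 0] a0 by simp
    then show ?thesis unfolding T_def by simp
  qed
  have bdd: "bdd_above (range (T v))" for v
    using Tbd by (intro bdd_aboveI[of _ "max v 0"]) auto
  have P_th: "P (th s0) = a s0" for s0
  proof (rule antisym)
    show "P (th s0) \<le> a s0" unfolding P_def
    proof (rule cSUP_least)
      fix s
      show "T (th s0) s \<le> a s0"
      proof (cases "s \<le> s0")
        case True then show ?thesis using ma[of s s0] unfolding T_def by simp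
      next
        case False
        then have "b s0 \<le> b s" using mb[of s0 s] by simp
        then show ?thesis unfolding T_def using tha[of s] tha[of s0] by simp
      qed
    qed simp
    show "a s0 \<le> P (th s0)" unfolding P_def
      using cSUP_upper[OF UNIV_I bdd[of "th s0"], of s0] by (simp add: T_def)
  qed
  have P_mono: "P v \<le> P w" if "v \<le> w" for v w
    unfolding P_def
  proof (rule cSUP_least)
    fix s
    have "T v s \<le> T w s" using that unfolding T_def by simp
    also have "\<dots> \<le> (SUP s. T w s)" by (rule cSUP_upper[OF UNIV_I bdd])
    finally show "T v s \<le> (SUP s. T w s)" .
  qed simp
  have P_lip: "P w - P v \<le> w - v" if "v \<le> w" for v w
  proof -
    have "P w \<le> P v + (w - v)" unfolding P_def
    proof (rule cSUP_least)
      fix s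
      have "T w s \<le> T v s + (w - v)" using that unfolding T_def by simp
      also have "\<dots> \<le> (SUP s. T v s) + (w - v)" using cSUP_upper[OF UNIV_I bdd] by simp
      finally show "T w s \<le> (SUP s. T v s) + (w - v)" .
    qed simp
    then show ?thesis by simp
  qed
  have P_cont: "continuous_on UNIV P"
  proof (rule lipschitz_on_continuous_on[where L=1], rule lipschitz_onI)
    fix v w :: real
    show "dist (P v) (P w) \<le> 1 * dist v w"
      using P_mono[of v w] P_mono[of w v] P_lip[of v w] P_lip[of w v]
      by (cases "v \<le> w") (auto simp: dist_real_def)
  qed simp
  define p where "p x = P (fd x)" for x
  have pc: "continuous_on UNIV p"
    unfolding p_def by (rule continuous_on_compose2[OF P_cont fdc]) auto
  obtain F1 where DF1: "\<And>x. (F1 has_real_derivative p x) (at x)"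
    using antideriv_exists[OF pc] by blast
  define F2 where "F2 x = f x - F1 x" for x
  have DF2: "(F2 has_real_derivative fd x - p x) (at x)" for x
    unfolding F2_def by (intro DERIV_diff Df DF1)
  have dF1: "deriv F1 = p" using DF1 DERIV_imp_deriv by blast
  have dF2: "deriv F2 = (\<lambda>x. fd x - p x)" using DF2 DERIV_imp_deriv by blast
  have cv1: "convex_on UNIV F1"
    by (rule convex_on_realI[OF _ DF1]) (auto simp: p_def intro: P_mono mf)
  have cv2: "convex_on UNIV F2"
  proof (rule convex_on_realI[OF _ DF2])
    fix x y :: real assume "x \<le> y"
    then show "fd x - p x \<le> fd y - p y"
      using mf[of x y] P_lip[of "fd x" "fd y"] unfolding p_def by simp
  qed simp
  have C1_1: "C1 F1" unfolding C1_def dF1 using DF1 pc real_differentiable_def by blast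
  have C1_2: "C1 F2" unfolding C1_def dF2
    using DF2 real_differentiable_def continuous_on_diff[OF fdc pc] by blast
  have HL: "hopf_lax \<theta> t f x = hopf_lax \<alpha> t F1 x + hopf_lax \<beta> t F2 x" if tpos: "t > 0" for t x
  proof -
    define k where "k y = fd y + th ((y - x) / t)" for y
    have kc: "continuous_on UNIV k" unfolding k_def
      by (intro continuous_on_add fdc continuous_on_compose2[OF thc]) (use tpos in \<open>auto intro!: continuous_intros\<close>)
    define c where "c = th 1"
    have thm1: "th (-1) = - c" using oth[of 1] c_def by simp
    obtain B where B: "\<And>y. B \<le> f y" using assms(11) by (auto simp: bdd_below_def)
    have ex1: "\<exists>y. k y \<ge> 0"
    proof (rule ccontr)
      assume "\<not> ?thesis"
      then have neg: "k y < 0" for y by (meson not_le)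
      define y where "y = x + t + (f (x + t) - B + 1) / c"
      have B1: "f (x+t) - B + 1 > 0" using B[of "x+t"] by simp
      have yge: "y - x - t \<ge> 0" unfolding y_def using B1 c_pos c_def by simp
      have "(y - x) / t \<ge> 1" using yge tpos by simp
      then have "th ((y - x) / t) \<ge> c" using mth c_def by blast
      then have fdy: "fd y \<le> - c" using neg[of y] unfolding k_def by simp
      have "f (x + t) \<ge> f y + fd y * (x + t - y)" by (rule tangent_ineq[OF assms(9) Df])
      moreover have "fd y * (x + t - y) \<ge> c * (y - x - t)"
        using mult_right_mono[OF fdy yge] by (simp add: algebra_simps)
      ultimately have "f y \<le> f (x + t) - c * (y - x - t)" by simp
      also have "c * (y - x - t) = f (x + t) - B + 1" unfolding y_def using c_pos c_def by simp
      finally show False using B[of y] by simp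
    qed
    have ex2: "\<exists>y. k y \<le> 0"
    proof (rule ccontr)
      assume "\<not> ?thesis"
      then have pos: "k y > 0" for y by (meson not_le)
      define y where "y = x - t - (f (x - t) - B + 1) / c"
      have B1: "f (x-t) - B + 1 > 0" using B[of "x-t"] by simp
      have yge: "x - t - y \<ge> 0" unfolding y_def using B1 c_pos c_def by simp
      have "(y - x) / t \<le> -1" using yge tpos by (simp add: divide_le_eq)
      then have "th ((y - x) / t) \<le> - c" using mth thm1 by metis
      then have fdy: "fd y \<ge> c" using pos[of y] unfolding k_def by simp
      have "f (x - t) \<ge> f y + fd y * (x - t - y)" by (rule tangent_ineq[OF assms(9) Df])
      moreover have "fd y * (x - t - y) \<ge> c * (x - t - y)"
        using mult_right_mono[OF fdy yge] by (simp add: algebra_simps)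
      ultimately have "f y \<le> f (x - t) - c * (x - t - y)" by simp
      also have "c * (x - t - y) = f (x - t) - B + 1" unfolding y_def using c_pos c_def by simp
      finally show False using B[of y] by simp
    qed
    obtain y1 y2 where y1: "k y1 \<ge> 0" and y2: "k y2 \<le> 0" using ex1 ex2 by blast
    obtain z where kz: "k z = 0"
    proof (cases "y2 \<le> y1")
      case True
      then show ?thesis using IVT'[of k y2 0 y1] y1 y2 continuous_on_subset[OF kc] that by blast
    next
      case False
      then show ?thesis using IVT2'[of k y2 0 y1] y1 y2 continuous_on_subset[OF kc] that by force
    qed
    define r where "r = (z - x) / t"
    have fdz: "fd z = th (- r)" using kz oth[of r] unfolding k_def r_def by simp
    have pz: "p z = - a r" unfolding p_def fdz P_th oa ..
    have p2z: "fd z - p z = - b r" using fdz pz oth[of r] tha[of r] by simp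
    have ty: "t * ((y - x) / t - r) = y - z" for y unfolding r_def using tpos by (simp add: field_simps)
    define G1 where "G1 y = F1 y + t * \<alpha> ((y - x) / t)" for y
    define G2 where "G2 y = F2 y + t * \<beta> ((y - x) / t)" for y
    define G where "G y = f y + t * \<theta> ((y - x) / t)" for y
    have GG: "G y = G1 y + G2 y" for y
      unfolding G_def G1_def G2_def F2_def using assms(7)[of "(y - x) / t", symmetric] by (simp add: distrib_left)
    have min1: "G1 z \<le> G1 y" for y
    proof -
      have h1: "F1 y \<ge> F1 z + p z * (y - z)" by (rule tangent_ineq[OF cv1 DF1])
      have "\<alpha> ((y - x) / t) \<ge> \<alpha> r + a r * ((y - x) / t - r)" by (rule tangent_ineq[OF cva Da])
      then have "t * \<alpha> ((y - x) / t) \<ge> t * (\<alpha> r + a r * ((y - x) / t - r))"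
        using tpos by (intro mult_left_mono) auto
      moreover have "t * (\<alpha> r + a r * ((y - x) / t - r)) = t * \<alpha> r + a r * (t * ((y - x) / t - r))"
        by (simp add: algebra_simps)
      ultimately have "t * \<alpha> ((y - x) / t) \<ge> t * \<alpha> r + a r * (y - z)"
        unfolding ty[of y] by linarith
      with h1 show ?thesis unfolding G1_def r_def[symmetric] using pz by (simp add: algebra_simps)
    qed
    have min2: "G2 z \<le> G2 y" for y
    proof -
      have h1: "F2 y \<ge> F2 z + (fd z - p z) * (y - z)" by (rule tangent_ineq[OF cv2 DF2])
      have "\<beta> ((y - x) / t) \<ge> \<beta> r + b r * ((y - x) / t - r)" by (rule tangent_ineq[OF cvb Db])
      then have "t * \<beta> ((y - x) / t) \<ge> t * (\<beta> r + b r * ((y - x) / t - r))"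
        using tpos by (intro mult_left_mono) auto
      moreover have "t * (\<beta> r + b r * ((y - x) / t - r)) = t * \<beta> r + b r * (t * ((y - x) / t - r))"
        by (simp add: algebra_simps)
      ultimately have "t * \<beta> ((y - x) / t) \<ge> t * \<beta> r + b r * (y - z)"
        unfolding ty[of y] by linarith
      with h1 show ?thesis unfolding G2_def r_def[symmetric] using p2z by (simp add: algebra_simps)
    qed
    have min: "G z \<le> G y" for y using min1[of y] min2[of y] GG by simp
    have "hopf_lax \<theta> t f x = ereal (G z)"
      unfolding hopf_lax_def G_def[symmetric] by (rule INF_attained[where F=G, OF min])
    moreover have "hopf_lax \<alpha> t F1 x = ereal (G1 z)"
      unfolding hopf_lax_def G1_def[symmetric] by (rule INF_attained[where F=G1, OF min1])
    moreover have "hopf_lax \<beta> t F2 x = ereal (G2 z)"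
      unfolding hopf_lax_def G2_def[symmetric] by (rule INF_attained[where F=G2, OF min2])
    ultimately show ?thesis using GG by simp
  qed
  have DI: "deriv F1 x = a (inv_into UNIV th (fd x))" if "fd x \<in> range th" for x
  proof -
    have "th (inv_into UNIV th (fd x)) = fd x" using that by (rule f_inv_into_f)
    then have "P (fd x) = a (inv_into UNIV th (fd x))" using P_th by metis
    then show ?thesis using dF1 p_def by simp
  qed
  show ?thesis
    apply (rule exI[of _ F1], rule exI[of _ F2])
    using cv1 cv2 C1_1 C1_2 HL DI unfolding F2_def a_def th_def fd_def by auto
qed

end
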